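(* Let $V$ be a finite set with $|V|\ge 2$, let $A$ be a real symmetric matrix indexed by $V$, and let $(X,Y)$ be a separation of $A$. If $x\in X\setminus Y$ is a simplicial vertex of the principal submatrix $A[X]$, then $x$ is a simplicial vertex of $A$.
   Context: $\min A=\min\{A_{xy}:x\ne y\in V\}$. A separation of $A$ is a pair $(X,Y)$ of subsets of $V$ with $X\cup Y=V$, $X\setminus Y\neq\emptyset$, $Y\setminus X\ne\emptyset$, and $A_{xy}=\min A$ for all $x\in X\setminus Y$, $y\in Y\setminus X$. $A[X]$ denotes the principal submatrix of $A$ indexed by $X$. An element $v$ is simplicial in a symmetric matrix $B$ indexed by $U$ if $B_{yz}\ge\min\{B_{vy},B_{vz}\}$ for all distinct $y,z\in U\setminus\{v\}$. *)

theory Defs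
  imports Complex_Main
begin

text \<open>A real symmetric matrix indexed by a finite set V is a function
  A :: 'a => 'a => real, considered on V x V only.\<close>

definition sym_matrix :: "'a set \<Rightarrow> ('a \<Rightarrow> 'a \<Rightarrow> real) \<Rightarrow> bool" where
  "sym_matrix V A \<longleftrightarrow> (\<forall>x\<in>V. \<forall>y\<in>V. A x y = A y x)"

definition min_entry :: "'a set \<Rightarrow> ('a \<Rightarrow> 'a \<Rightarrow> real) \<Rightarrow> real" where
  "min_entry V A = Min {A x y | x y. x \<in> V \<and> y \<in> V \<and> x \<noteq> y}"

definition separation :: "'a set \<Rightarrow> ('a \<Rightarrow> 'a \<Rightarrow> real) \<Rightarrow> 'a set \<Rightarrow> 'a set \<Rightarrow> bool" where
  "separation V A X Y \<longleftrightarrow> X \<subseteq> V \<and> Y \<subseteq> V \<and> X \<union> Y = V \<and> X - Y \<noteq> {} \<and> Y - X \<noteq> {} \<and>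
     (\<forall>x\<in>X - Y. \<forall>y\<in>Y - X. A x y = min_entry V A)"

text \<open>The principal submatrix A[X] is A restricted to X x X; so being simplicial in
  A[X] is being simplicial in A with index set X.\<close>
definition simplicial :: "'a set \<Rightarrow> ('a \<Rightarrow> 'a \<Rightarrow> real) \<Rightarrow> 'a \<Rightarrow> bool" where
  "simplicial U B v \<longleftrightarrow> v \<in> U \<and>
     (\<forall>y\<in>U - {v}. \<forall>z\<in>U - {v}. y \<noteq> z \<longrightarrow> B y z \<ge> min (B v y) (B v z))"

end

theory Submission
  imports Defs
begin

lemma min_le:
  assumes "finite V" "y \<in> V" "z \<in> V" "y \<noteq> z"
  shows "min_entry V A \<le> A y z"
proof -
  have "finite {A x y | x y. x \<in> V \<and> y \<in> V \<and> x \<noteq> y}"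
  proof -
    have "{A x y | x y. x \<in> V \<and> y \<in> V \<and> x \<noteq> y} \<subseteq> (\<lambda>(x,y). A x y) ` (V \<times> V)" by auto
    thus ?thesis using assms(1) finite_subset by blast
  qed
  moreover have "A y z \<in> {A x y | x y. x \<in> V \<and> y \<in> V \<and> x \<noteq> y}" using assms by blast
  ultimately show ?thesis unfolding min_entry_def by simp
qed

theorem lemma7:
  fixes V :: "'a set" and A :: "'a \<Rightarrow> 'a \<Rightarrow> real" and X Y :: "'a set" and x :: 'a
  assumes "finite V" and "card V \<ge> 2"
    and "sym_matrix V A"
    and "separation V A X Y"
    and "x \<in> X - Y"
    and "simplicial X A x"
  shows "simplicial V A x"
proof -
  have sep: "X \<subseteq> V" "X \<union> Y = V" "\<forall>a\<in>X - Y. \<forall>b\<in>Y - X. A a b = min_entry V A"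
    using assms(4) unfolding separation_def by auto
  have sx: "\<forall>y\<in>X - {x}. \<forall>z\<in>X - {x}. y \<noteq> z \<longrightarrow> A y z \<ge> min (A x y) (A x z)"
    using assms(6) unfolding simplicial_def by auto
  show ?thesis unfolding simplicial_def
  proof (intro conjI ballI impI)
    show "x \<in> V" using sep assms(5) by auto
  next
    fix y z assume y: "y \<in> V - {x}" and z: "z \<in> V - {x}" and yz: "y \<noteq> z"
    have m: "min_entry V A \<le> A y z" using min_le[OF assms(1)] y z yz by auto
    show "A y z \<ge> min (A x y) (A x z)"
    proof (cases "y \<in> X")
      case True
      show ?thesis
      proof (cases "z \<in> X")
        case True
        then show ?thesis using sx \<open>y \<in> X\<close> y z yz by auto
      next
        case False
        then have "A x z = min_entry V A" using sep assms(5) z by auto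
        then show ?thesis using m by linarith
      qed
    next
      case False
      then have "A x y = min_entry V A" using sep assms(5) y by auto
      then show ?thesis using m by linarith
    qed
  qed
qed

end
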